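(* Let $m$ be even, $1\le r\le m$, and let $f\colon\mathbb{F}_2^m=\mathbb{F}_2^{m-r}\times\mathbb{F}_2^r\to\mathbb{F}_2$ be a bent function. For $\lambda\in\mathbb{F}_2^r$ define $f_\lambda\colon\mathbb{F}_2^{m-r}\to\mathbb{F}_2$ by $f_\lambda(t)=f(t,\lambda)$. Then every Walsh coefficient of $f_\lambda$ lies in the set $W_r=\{2^{m/2}-i\cdot 2^{m/2-r+1} : 0\le i\le 2^r\}$.
   Context: The Walsh coefficient of a Boolean function $g\colon\mathbb{F}_2^n\to\mathbb{F}_2$ at $a\in\mathbb{F}_2^n$ is $\widehat g(a)=\sum_{x\in\mathbb{F}_2^n}(-1)^{g(x)+a\cdot x}$, where $a\cdot x$ is the standard inner product. For $m$ even, $f\colon\mathbb{F}_2^m\to\mathbb{F}_2$ is bent if $\widehat f(a)\in\{\pm 2^{m/2}\}$ for all $a\in\mathbb{F}_2^m$ (equivalently, for all nonzero $a$ and all $b$, $f(x+a)+f(x)=b$ has $2^{m-1}$ solutions). *)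

theory Defs
  imports Complex_Main
begin

text \<open>Vectors of F_2^n are modelled as boolean lists of length n (True = 1).
  Addition in F_2 is exclusive or.\<close>

definition vecs :: "nat \<Rightarrow> bool list set" where
  "vecs n = {xs. length xs = n}"

definition dotp :: "bool list \<Rightarrow> bool list \<Rightarrow> bool" where
  "dotp a x = odd (card {i. i < length a \<and> i < length x \<and> a ! i \<and> x ! i})"

definition walsh :: "nat \<Rightarrow> (bool list \<Rightarrow> bool) \<Rightarrow> bool list \<Rightarrow> real" where
  "walsh n g a = (\<Sum>x\<in>vecs n. (-1::real) ^ (of_bool (g x) + of_bool (dotp a x)))"

definition bent :: "nat \<Rightarrow> (bool list \<Rightarrow> bool) \<Rightarrow> bool" where
  "bent m f \<longleftrightarrow> (\<forall>a\<in>vecs m. walsh m f a \<in> {2 ^ (m div 2), - (2 ^ (m div 2))})"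

text \<open>W_r = { 2^(m/2) - i 2^(m/2-r+1) : 0 <= i <= 2^r } (exponent may be negative).\<close>
definition W_set :: "nat \<Rightarrow> nat \<Rightarrow> real set" where
  "W_set m r = {2 ^ (m div 2) - real i * (2::real) powi (int (m div 2) - int r + 1) | i. i \<le> 2 ^ r}"

end

theory Submission
  imports Defs
begin

definition sg :: "bool \<Rightarrow> real" where "sg p = (if p then -1 else 1)"

lemma pw: "(-1::real) ^ (of_bool p + of_bool q) = sg p * sg q"
  by (simp add: power_add sg_def)

lemma sg_xor: "sg (p \<noteq> q) = sg p * sg q"
  by (simp add: sg_def)

lemma dotp_Nil: "dotp [] [] = False"
  by (simp add: dotp_def)

lemma dotp_Cons: "dotp (x#a) (y#t) = ((x \<and> y) \<noteq> dotp a t)"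
proof -
  let ?S = "{i. i < length a \<and> i < length t \<and> a!i \<and> t!i}"
  have fin: "finite ?S" by (rule finite_subset[of _ "{..<length a}"]) auto
  have eq: "{i. i < length (x#a) \<and> i < length (y#t) \<and> (x#a)!i \<and> (y#t)!i}
      = (if x \<and> y then {0} else {}) \<union> Suc ` ?S"
    apply (rule set_eqI)
    subgoal for i by (cases i) auto
    done
  have c: "card (Suc ` ?S) = card ?S" by (simp add: card_image)
  show ?thesis
  proof (cases "x \<and> y")
    case True
    have "card ({0} \<union> Suc ` ?S) = Suc (card ?S)"
      using fin c by (subst card_Un_disjoint) auto
    then show ?thesis using True unfolding dotp_def eq by simp
  next
    case False
    then show ?thesis unfolding dotp_def eq using c by auto
  qed
qed

lemma dotp_append: "length a = length t \<Longrightarrow> dotp (a@b) (t@s) = (dotp a t \<noteq> dotp b s)"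
proof (induction a arbitrary: t)
  case Nil then show ?case by (simp add: dotp_Nil)
next
  case (Cons x a)
  then obtain y t' where "t = y#t'" "length a = length t'" by (cases t) auto
  then show ?case using Cons by (auto simp: dotp_Cons)
qed

lemma vecs_0: "vecs 0 = {[]}" by (auto simp: vecs_def)

lemma vecs_Suc: "vecs (Suc n) = (\<lambda>(x,b). x#b) ` (UNIV \<times> vecs n)"
  by (auto simp: vecs_def length_Suc_conv image_iff)

lemma inj_Cons: "inj_on (\<lambda>(x,b). x#b) A" by (auto simp: inj_on_def)

lemma finite_vecs: "finite (vecs n)"
  by (induction n) (auto simp: vecs_0 vecs_Suc)

lemma card_vecs: "card (vecs n) = 2 ^ n"
  by (induction n) (auto simp: vecs_0 vecs_Suc card_image[OF inj_Cons] card_cartesian_product)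

lemma sum_vecs_Suc: "(\<Sum>v\<in>vecs (Suc n). g v) = (\<Sum>x\<in>UNIV. \<Sum>b\<in>vecs n. g (x#b))"
  unfolding vecs_Suc
  by (simp add: sum.reindex[OF inj_Cons] sum.cartesian_product prod.case_distrib)

lemma vecs_append: "vecs (n+k) = (\<lambda>(t,s). t@s) ` (vecs n \<times> vecs k)"
proof (rule set_eqI)
  fix xs
  show "xs \<in> vecs (n+k) \<longleftrightarrow> xs \<in> (\<lambda>(t,s). t@s) ` (vecs n \<times> vecs k)"
  proof
    assume "xs \<in> vecs (n+k)"
    then have "(take n xs, drop n xs) \<in> vecs n \<times> vecs k" "xs = take n xs @ drop n xs"
      by (auto simp: vecs_def)
    then show "xs \<in> (\<lambda>(t,s). t@s) ` (vecs n \<times> vecs k)" by (metis (no_types, lifting) case_prod_conv image_eqI)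
  qed (auto simp: vecs_def)
qed

lemma inj_app: "inj_on (\<lambda>(t,s). t@s) (vecs n \<times> vecs k)"
  by (auto simp: inj_on_def vecs_def)

lemma sum_vecs_append: "(\<Sum>v\<in>vecs (n+k). g v) = (\<Sum>t\<in>vecs n. \<Sum>s\<in>vecs k. g (t@s))"
  unfolding vecs_append
  by (simp add: sum.reindex[OF inj_app] sum.cartesian_product prod.case_distrib)

lemma orth: "s \<in> vecs r \<Longrightarrow> l \<in> vecs r \<Longrightarrow>
  (\<Sum>b\<in>vecs r. sg (dotp b s) * sg (dotp b l)) = (if s = l then 2^r else 0)"
proof (induction r arbitrary: s l)
  case 0 then show ?case by (simp add: vecs_0 vecs_def dotp_Nil sg_def)
next
  case (Suc r)
  then obtain y s' z l' where sl: "s = y#s'" "l = z#l'" "s' \<in> vecs r" "l' \<in> vecs r"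
    by (auto simp: vecs_def length_Suc_conv)
  have "(\<Sum>b\<in>vecs (Suc r). sg (dotp b s) * sg (dotp b l))
     = (\<Sum>x\<in>UNIV. sg (x \<and> y) * sg (x \<and> z) * (\<Sum>b\<in>vecs r. sg (dotp b s') * sg (dotp b l')))"
    unfolding sum_vecs_Suc sl(1,2) dotp_Cons sg_xor
    by (simp add: sum_distrib_left mult_ac)
  also have "\<dots> = (if y = z then 2 else 0) * (if s' = l' then 2^r else 0)"
    using Suc.IH[OF sl(3,4)] by (simp add: UNIV_bool sg_def)
  finally show ?case using sl by simp
qed

lemma pm1_sum: "finite A \<Longrightarrow> (\<And>x. x \<in> A \<Longrightarrow> g x \<in> {1, -1::real}) \<Longrightarrow>
  sum g A = real (card A) - 2 * real (card {x\<in>A. g x = -1})"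
proof -
  assume fin: "finite A" and pm: "\<And>x. x \<in> A \<Longrightarrow> g x \<in> {1, -1::real}"
  let ?P = "{x\<in>A. g x = 1}" and ?N = "{x\<in>A. g x = -1}"
  have A: "A = ?P \<union> ?N" using pm by auto
  have d: "?P \<inter> ?N = {}" by auto
  have "sum g A = sum g ?P + sum g ?N" using fin by (subst A, subst sum.union_disjoint) auto
  also have "\<dots> = real (card ?P) - real (card ?N)" by simp
  also have "card A = card ?P + card ?N" using fin by (subst A, subst card_Un_disjoint) auto
  ultimately show ?thesis by simp
qed


theorem mainTheorem7:
  fixes m r :: nat and f :: "bool list \<Rightarrow> bool" and lam a :: "bool list"
  assumes "even m" and "1 \<le> r" and "r \<le> m"
    and "bent m f"
    and "lam \<in> vecs r"
    and "a \<in> vecs (m - r)"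
  shows "walsh (m - r) (\<lambda>t. f (t @ lam)) a \<in> W_set m r"
proof -
  define n where "n = m - r"
  define h where "h = m div 2"
  define w where "w = walsh (m - r) (\<lambda>t. f (t @ lam)) a"
  define F where "F t s = sg (f (t@s)) * sg (dotp a t)" for t s
  have mnr: "m = n + r" using assms(3) n_def by simp
  have alen: "length a = n" using assms(6) n_def by (simp add: vecs_def)
  have key1: "walsh m f (a@b) = (\<Sum>t\<in>vecs n. \<Sum>s\<in>vecs r. F t s * sg (dotp b s))"
    if "b \<in> vecs r" for b
  proof -
    have "walsh m f (a@b) = (\<Sum>t\<in>vecs n. \<Sum>s\<in>vecs r. sg (f (t@s)) * sg (dotp (a@b) (t@s)))"
      unfolding walsh_def pw mnr sum_vecs_append ..
    also have "\<dots> = (\<Sum>t\<in>vecs n. \<Sum>s\<in>vecs r. F t s * sg (dotp b s))"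
      apply (rule sum.cong, simp, rule sum.cong, simp)
      subgoal for t s using alen by (simp add: vecs_def dotp_append F_def sg_def)
      done
    finally show ?thesis .
  qed
  have w_eq: "w = (\<Sum>t\<in>vecs n. F t lam)"
    unfolding w_def walsh_def pw F_def n_def ..
  have key2: "(\<Sum>b\<in>vecs r. sg (dotp b lam) * walsh m f (a@b)) = 2^r * w"
  proof -
    have "(\<Sum>b\<in>vecs r. sg (dotp b lam) * walsh m f (a@b))
        = (\<Sum>b\<in>vecs r. \<Sum>t\<in>vecs n. \<Sum>s\<in>vecs r. F t s * (sg (dotp b s) * sg (dotp b lam)))"
      by (rule sum.cong) (simp_all add: key1 sum_distrib_left mult_ac)
    also have "\<dots> = (\<Sum>t\<in>vecs n. \<Sum>s\<in>vecs r. \<Sum>b\<in>vecs r. F t s * (sg (dotp b s) * sg (dotp b lam)))"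
      by (subst sum.swap) (rule sum.cong[OF refl], rule sum.swap)
    also have "\<dots> = (\<Sum>t\<in>vecs n. \<Sum>s\<in>vecs r. F t s * (if s = lam then 2^r else 0))"
      by (simp add: sum_distrib_left[symmetric] orth assms(5))
    also have "\<dots> = (\<Sum>t\<in>vecs n. F t lam * 2^r)"
    proof (rule sum.cong[OF refl])
      fix t
      have "(\<Sum>s\<in>vecs r. F t s * (if s = lam then 2^r else 0)) = (\<Sum>s\<in>vecs r. if s = lam then F t s * 2^r else 0)"
        by (rule sum.cong) auto
      also have "\<dots> = F t lam * 2^r" using assms(5) finite_vecs by (simp add: sum.delta')
      finally show "(\<Sum>s\<in>vecs r. F t s * (if s = lam then 2^r else 0)) = F t lam * 2^r" .
    qed
    finally show ?thesis using w_eq by (simp add: sum_distrib_left mult.commute)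
  qed
  define g where "g b = sg (dotp b lam) * walsh m f (a@b) / 2^h" for b
  have gpm: "g b \<in> {1, -1}" if "b \<in> vecs r" for b
  proof -
    have "a@b \<in> vecs m" using that alen mnr by (simp add: vecs_def)
    then have "walsh m f (a@b) \<in> {2^h, -(2^h)}" using assms(4) by (simp add: bent_def h_def)
    then show ?thesis by (auto simp: g_def sg_def)
  qed
  define i where "i = card {b\<in>vecs r. g b = -1}"
  have ile: "i \<le> 2^r" unfolding i_def
    by (metis (no_types, lifting) card_mono card_vecs finite_vecs mem_Collect_eq subsetI)
  have "sum g (vecs r) = 2^r - 2 * real i"
    using pm1_sum[OF finite_vecs gpm] by (simp add: card_vecs i_def)
  moreover have "sum g (vecs r) = 2^r * w / 2^h"
    unfolding g_def key2[symmetric] by (simp add: sum_divide_distrib)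
  ultimately have "2^r * w = 2^h * (2^r - 2 * real i)" by (simp add: field_simps)
  then have weq: "w = 2^h - real i * (2^(h+1) / 2^r)"
    by (simp add: field_simps)
  have "(2::real) powi (int h - int r + 1) = 2^(h+1) / 2^r"
  proof -
    have e: "int h - int r + 1 = int (h+1) - int r" by simp
    have "(2::real) powi (int (h+1) - int r) = 2 powi int (h+1) / 2 powi int r"
      by (rule power_int_diff) simp
    then show ?thesis unfolding e by (simp only: power_int_of_nat)
  qed
  then have "w = 2 ^ (m div 2) - real i * (2::real) powi (int (m div 2) - int r + 1)"
    using weq h_def by simp
  then show ?thesis unfolding W_set_def w_def using ile by blast
qed

end
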